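(* Let $H$ be a finite subgroup of a group $G$, and suppose that $A\subseteq aH\cup bH$, where $a,b\in G$ are elements with $a^{-1}b\in N(H)$ and $(a^{-1}b)^2\notin H$. If $|A|>\frac95\,|H|$, then $|A^{-1}A|<\frac53\,|A|$; moreover, in this case $A^{-1}A$ is a disjoint union of $H$ and two double $H$-cosets (sets of the form $HgH$, $g\in G$), each of size $|H|$.
   Context: $A^{-1}A=\{a_1^{-1}a_2\colon a_1,a_2\in A\}$. For a subgroup $H\le G$, $N(H)=\{g\in G\colon gH=Hg\}$ denotes its normalizer. *)

theory Defs
  imports Complex_Main "HOL-Algebra.Coset" "HOL-Algebra.Group_Action"
begin

definition normalizer_lr :: "('a, 'b) monoid_scheme \<Rightarrow> 'a set \<Rightarrow> 'a set" where
  "normalizer_lr G H = {g \<in> carrier G. g <#\<^bsub>G\<^esub> H = H #>\<^bsub>G\<^esub> g}"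

definition double_coset :: "('a, 'b) monoid_scheme \<Rightarrow> 'a set \<Rightarrow> 'a \<Rightarrow> 'a set" where
  "double_coset G H g = H <#>\<^bsub>G\<^esub> (g <#\<^bsub>G\<^esub> H)"

end

theory Submission
  imports Defs
begin

lemma pigeon_aux:
  assumes "finite S" "finite P" "Q \<subseteq> S" "inj_on f P" "f ` P \<subseteq> S"
    and "card P + card Q > card S"
  shows "\<exists>p\<in>P. f p \<in> Q"
proof (rule ccontr)
  assume "\<not> ?thesis"
  then have d: "f ` P \<inter> Q = {}" by auto
  have fin: "finite (f ` P)" "finite Q" using assms finite_subset by auto
  have "card (f ` P \<union> Q) = card P + card Q"
    using card_Un_disjoint[OF fin d] card_image[OF assms(4)] by simp
  moreover have "card (f ` P \<union> Q) \<le> card S"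
    using assms by (intro card_mono) auto
  ultimately show False using assms by simp
qed

context group
begin

lemma lc_mem: "x \<in> a <# H \<longleftrightarrow> (\<exists>h\<in>H. x = a \<otimes> h)"
  by (auto simp: l_coset_def)

lemma rc_mem: "x \<in> H #> a \<longleftrightarrow> (\<exists>h\<in>H. x = h \<otimes> a)"
  by (auto simp: r_coset_def)

lemma invA_A: "set_inv A <#> A = {inv u \<otimes> v | u v. u \<in> A \<and> v \<in> A}"
  by (auto simp: set_mult_def SET_INV_def)

lemma lc_card:
  assumes "subgroup H G" "a \<in> carrier G"
  shows "card (a <# H) = card H"
proof -
  have "a <# H = (\<lambda>h. a \<otimes> h) ` H" by (auto simp: l_coset_def)
  moreover have "inj_on (\<lambda>h. a \<otimes> h) H"
    using assms by (auto simp: inj_on_def subgroup.mem_carrier)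
  ultimately show ?thesis by (simp add: card_image)
qed

lemma double_coset_eq:
  assumes "subgroup H G" "g \<in> carrier G" "g <# H = H #> g"
  shows "double_coset G H g = g <# H"
proof
  show "double_coset G H g \<subseteq> g <# H"
  proof
    fix x assume "x \<in> double_coset G H g"
    then obtain h1 h2 where h: "h1 \<in> H" "h2 \<in> H" "x = h1 \<otimes> (g \<otimes> h2)"
      by (auto simp: double_coset_def set_mult_def l_coset_def)
    have "h1 \<otimes> g \<in> g <# H" using assms(3) h by (auto simp: rc_mem)
    then obtain h3 where h3: "h3 \<in> H" "h1 \<otimes> g = g \<otimes> h3" by (auto simp: lc_mem)
    have c: "h1 \<in> carrier G" "h2 \<in> carrier G" "h3 \<in> carrier G"
      using h h3 subgroup.mem_carrier[OF assms(1)] by auto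
    have "x = (h1 \<otimes> g) \<otimes> h2" using h c assms by (simp add: m_assoc)
    also have "\<dots> = g \<otimes> (h3 \<otimes> h2)" using h3 c assms by (simp add: m_assoc)
    finally show "x \<in> g <# H" using h h3 assms(1)
      by (auto simp: lc_mem intro: subgroup.m_closed)
  qed
next
  show "g <# H \<subseteq> double_coset G H g"
  proof
    fix x assume "x \<in> g <# H"
    then obtain h where h: "h \<in> H" "x = g \<otimes> h" by (auto simp: lc_mem)
    have "x = \<one> \<otimes> (g \<otimes> h)" using h assms subgroup.mem_carrier[OF assms(1)] by simp
    then show "x \<in> double_coset G H g" using h assms(1)
      unfolding double_coset_def set_mult_def l_coset_def
      by (auto intro!: subgroup.one_closed)
  qed
qed

lemma coset_pick: "u \<in> (a <# H) \<union> (b <# H) \<Longrightarrow> \<exists>y h. (y = a \<or> y = b) \<and> h \<in> H \<and> u = y \<otimes> h"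
  by (auto simp: lc_mem)

lemma lc_finite: "finite H \<Longrightarrow> finite (a <# H)"
  by (simp add: l_coset_def)

lemma conj_swap:
  assumes "x \<in> carrier G" "y \<in> carrier G" "z \<in> carrier G" "x \<otimes> y = y \<otimes> z"
  shows "inv y \<otimes> x = z \<otimes> inv y"
proof -
  have "inv y \<otimes> x = inv y \<otimes> (x \<otimes> y) \<otimes> inv y" using assms(1-3) by (simp add: m_assoc)
  also have "\<dots> = inv y \<otimes> (y \<otimes> z) \<otimes> inv y" using assms(4) by simp
  also have "\<dots> = z \<otimes> inv y" using assms(1-3) by (simp add: m_assoc[symmetric])
  finally show ?thesis .
qed

lemma inv_mul_expand:
  assumes "x \<in> carrier G" "y \<in> carrier G" "h1 \<in> carrier G" "h2 \<in> carrier G"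
  shows "inv (x \<otimes> h1) \<otimes> (y \<otimes> h2) = inv h1 \<otimes> (inv x \<otimes> y) \<otimes> h2"
  using assms by (simp add: inv_mult_group m_assoc)

lemma main_core:
  assumes HG: "subgroup H G" and fH: "finite H"
    and ab: "a \<in> carrier G" "b \<in> carrier G"
    and AS: "A \<subseteq> (a <# H) \<union> (b <# H)"
    and N: "(inv a \<otimes> b) <# H = H #> (inv a \<otimes> b)"
    and g2: "(inv a \<otimes> b) \<otimes> (inv a \<otimes> b) \<notin> H"
    and cA: "real (card A) > 9/5 * real (card H)"
  shows "set_inv A <#> A = H \<union> ((inv a \<otimes> b) <# H) \<union> (inv (inv a \<otimes> b) <# H)
     \<and> H \<inter> ((inv a \<otimes> b) <# H) = {} \<and> H \<inter> (inv (inv a \<otimes> b) <# H) = {}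
     \<and> ((inv a \<otimes> b) <# H) \<inter> (inv (inv a \<otimes> b) <# H) = {}
     \<and> inv (inv a \<otimes> b) <# H = H #> inv (inv a \<otimes> b)"
proof -
  define g where "g = inv a \<otimes> b"
  have gc: "g \<in> carrier G" using ab by (simp add: g_def)
  have ginvc: "inv g \<in> carrier G" using gc by simp
  have Hc: "\<And>h. h \<in> H \<Longrightarrow> h \<in> carrier G" using subgroup.mem_carrier[OF HG] by auto
  have gnH: "g \<notin> H" using g2 subgroup.m_closed[OF HG] unfolding g_def[symmetric] by blast
  have N1: "\<exists>h'\<in>H. h \<otimes> g = g \<otimes> h'" if "h \<in> H" for h
  proof -
    have "h \<otimes> g \<in> H #> g" using that by (auto simp: rc_mem)
    then show ?thesis using N unfolding g_def[symmetric] by (auto simp: lc_mem)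
  qed
  have N3: "\<exists>h'\<in>H. h \<otimes> inv g = inv g \<otimes> h'" if "h \<in> H" for h
  proof -
    have "g \<otimes> h \<in> g <# H" using that by (auto simp: lc_mem)
    then have "g \<otimes> h \<in> H #> g" using N unfolding g_def[symmetric] by simp
    then obtain h' where h': "h' \<in> H" "g \<otimes> h = h' \<otimes> g" by (auto simp: rc_mem)
    have "inv g \<otimes> h' = h \<otimes> inv g"
      using conj_swap[OF Hc[OF h'(1)] gc Hc[OF that]] h'(2) by simp
    then show ?thesis using h' by (intro bexI[of _ h']) auto
  qed
  have Ninv: "inv g <# H = H #> inv g"
  proof
    show "inv g <# H \<subseteq> H #> inv g"
    proof
      fix x assume "x \<in> inv g <# H"
      then obtain h where h: "h \<in> H" "x = inv g \<otimes> h" by (auto simp: lc_mem)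
      obtain h' where h': "h' \<in> H" "h \<otimes> g = g \<otimes> h'" using N1[OF h(1)] by auto
      have "inv g \<otimes> h = h' \<otimes> inv g" using conj_swap[OF Hc[OF h(1)] gc Hc[OF h'(1)]] h' by simp
      then show "x \<in> H #> inv g" using h h' by (auto simp: rc_mem)
    qed
  next
    show "H #> inv g \<subseteq> inv g <# H"
      using N3 by (auto simp: rc_mem lc_mem)
  qed
  have ga: "a \<otimes> g = b" using ab by (simp add: g_def m_assoc[symmetric])
  have gb: "b \<otimes> inv g = a" using ab by (simp add: g_def inv_mult_group m_assoc[symmetric])
  have shift_H: "x \<otimes> h \<in> y <# H" if xy: "x \<in> y <# H" "h \<in> H" "y \<in> carrier G" for x y h
  proof -
    obtain h1 where "h1 \<in> H" "x = y \<otimes> h1" using lc_mem[THEN iffD1, OF xy(1)] by blast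
    then show ?thesis using xy Hc subgroup.m_closed[OF HG]
      by (auto simp: lc_mem m_assoc intro!: bexI[of _ "h1 \<otimes> h"])
  qed
  have shift_g: "x \<otimes> g \<in> b <# H" if xa: "x \<in> a <# H" for x
  proof -
    obtain h1 where h1: "h1 \<in> H" "x = a \<otimes> h1" using xa by (auto simp: lc_mem)
    obtain h' where h': "h' \<in> H" "h1 \<otimes> g = g \<otimes> h'" using N1[OF h1(1)] by auto
    have "x \<otimes> g = a \<otimes> (h1 \<otimes> g)" using h1 ab gc Hc by (simp add: m_assoc)
    also have "\<dots> = (a \<otimes> g) \<otimes> h'" using h' ab gc Hc by (simp add: m_assoc)
    finally show ?thesis using ga h' by (auto simp: lc_mem)
  qed
  have shift_ginv: "x \<otimes> inv g \<in> a <# H" if xb: "x \<in> b <# H" for x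
  proof -
    obtain h1 where h1: "h1 \<in> H" "x = b \<otimes> h1" using xb by (auto simp: lc_mem)
    obtain h' where h': "h' \<in> H" "h1 \<otimes> inv g = inv g \<otimes> h'" using N3[OF h1(1)] by auto
    have "x \<otimes> inv g = b \<otimes> (h1 \<otimes> inv g)" using h1 ab gc Hc by (simp add: m_assoc)
    also have "\<dots> = (b \<otimes> inv g) \<otimes> h'" using h' ab gc Hc by (simp add: m_assoc)
    finally show ?thesis using gb h' by (auto simp: lc_mem)
  qed
  have disj_ab: "(a <# H) \<inter> (b <# H) = {}"
  proof (rule ccontr)
    assume "(a <# H) \<inter> (b <# H) \<noteq> {}"
    then obtain h1 h2 where h: "h1 \<in> H" "h2 \<in> H" "a \<otimes> h1 = b \<otimes> h2" by (auto simp: lc_mem)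
    have hc: "h1 \<in> carrier G" "h2 \<in> carrier G" using Hc h by auto
    have "a \<otimes> h1 \<otimes> inv h2 = b \<otimes> h2 \<otimes> inv h2" using h(3) by simp
    then have "b = a \<otimes> (h1 \<otimes> inv h2)" using hc ab by (simp add: m_assoc)
    then have "g = h1 \<otimes> inv h2" unfolding g_def using hc ab by (simp add: m_assoc[symmetric])
    then show False using gnH h subgroup.m_closed[OF HG] subgroup.m_inv_closed[OF HG] by auto
  qed
  define Aa where "Aa = A \<inter> (a <# H)"
  define Ab where "Ab = A \<inter> (b <# H)"
  have finab: "finite (a <# H)" "finite (b <# H)" using fH lc_finite by auto
  have finA: "finite Aa" "finite Ab" using finab by (auto simp: Aa_def Ab_def)
  have "A = Aa \<union> Ab" using AS by (auto simp: Aa_def Ab_def)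
  moreover have "Aa \<inter> Ab = {}" using disj_ab by (auto simp: Aa_def Ab_def)
  ultimately have cardA: "card A = card Aa + card Ab" using finA by (simp add: card_Un_disjoint)
  have "card Aa \<le> card (a <# H)" using finab by (intro card_mono) (auto simp: Aa_def)
  then have "card Aa \<le> card H" using lc_card[OF HG ab(1)] by simp
  moreover have "card Ab \<le> card (b <# H)" using finab by (intro card_mono) (auto simp: Ab_def)
  then have "card Ab \<le> card H" using lc_card[OF HG ab(2)] by simp
  ultimately have big: "2 * card Aa > card H" "2 * card Ab > card H" "card Aa + card Ab > card H"
    using cA cardA by linarith+
  have pig: "c \<in> set_inv A <#> A"
    if X: "X = a \<or> X = b" and Y: "Y = a \<or> Y = b" and c: "c \<in> carrier G"
      and sh: "\<And>x. x \<in> X <# H \<Longrightarrow> x \<otimes> c \<in> Y <# H"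
      and cd: "card (A \<inter> (X <# H)) + card (A \<inter> (Y <# H)) > card H" for X Y c
  proof -
    have Xc: "X \<in> carrier G" "Y \<in> carrier G" using X Y ab by auto
    have Xsub: "X <# H \<subseteq> carrier G" "Y <# H \<subseteq> carrier G"
      using Xc Hc by (auto simp: lc_mem)
    have "\<exists>p\<in>A \<inter> (X <# H). p \<otimes> c \<in> A \<inter> (Y <# H)"
    proof (rule pigeon_aux[of "Y <# H"])
      show "finite (Y <# H)" "finite (A \<inter> (X <# H))" using fH lc_finite by auto
      show "A \<inter> (Y <# H) \<subseteq> Y <# H" by auto
      show "inj_on (\<lambda>p. p \<otimes> c) (A \<inter> (X <# H))" unfolding inj_on_def using Xsub c by (metis IntD2 right_cancel subsetD)
      show "(\<lambda>p. p \<otimes> c) ` (A \<inter> (X <# H)) \<subseteq> Y <# H" using sh by auto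
      show "card (A \<inter> (X <# H)) + card (A \<inter> (Y <# H)) > card (Y <# H)"
        using cd lc_card[OF HG Xc(2)] by simp
    qed
    then obtain p where p: "p \<in> A" "p \<in> X <# H" "p \<otimes> c \<in> A" by auto
    have "c = inv p \<otimes> (p \<otimes> c)" using p Xsub c by (auto simp: m_assoc[symmetric])
    then show ?thesis using p unfolding invA_A by blast
  qed
  have sup: "H \<union> (g <# H) \<union> (inv g <# H) \<subseteq> set_inv A <#> A"
  proof (intro Un_least subsetI)
    fix x assume "x \<in> H"
    then show "x \<in> set_inv A <#> A"
      using pig[of a a x] shift_H ab Hc big by (auto simp: Aa_def)
  next
    fix x assume "x \<in> g <# H"
    then obtain h where h: "h \<in> H" "x = g \<otimes> h" by (auto simp: lc_mem)
    have "\<And>y. y \<in> a <# H \<Longrightarrow> y \<otimes> (g \<otimes> h) \<in> b <# H"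
    proof -
      fix y assume "y \<in> a <# H"
      moreover have "y \<in> carrier G" using \<open>y \<in> a <# H\<close> ab Hc by (auto simp: lc_mem)
      ultimately show "y \<otimes> (g \<otimes> h) \<in> b <# H"
        using shift_H[OF shift_g h(1) ab(2)] h gc Hc by (simp add: m_assoc[symmetric])
    qed
    then show "x \<in> set_inv A <#> A"
      using pig[of a b x] h ab gc Hc big by (auto simp: Aa_def Ab_def)
  next
    fix x assume "x \<in> inv g <# H"
    then obtain h where h: "h \<in> H" "x = inv g \<otimes> h" by (auto simp: lc_mem)
    have "\<And>y. y \<in> b <# H \<Longrightarrow> y \<otimes> (inv g \<otimes> h) \<in> a <# H"
    proof -
      fix y assume "y \<in> b <# H"
      moreover have "y \<in> carrier G" using \<open>y \<in> b <# H\<close> ab Hc by (auto simp: lc_mem)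
      ultimately show "y \<otimes> (inv g \<otimes> h) \<in> a <# H"
        using shift_H[OF shift_ginv h(1) ab(1)] h gc Hc by (simp add: m_assoc[symmetric])
    qed
    then show "x \<in> set_inv A <#> A"
      using pig[of b a x] h ab gc Hc big by (auto simp: Aa_def Ab_def add.commute)
  qed
  have sub: "set_inv A <#> A \<subseteq> H \<union> (g <# H) \<union> (inv g <# H)"
  proof
    fix x assume "x \<in> set_inv A <#> A"
    then obtain u v where uv: "u \<in> A" "v \<in> A" "x = inv u \<otimes> v" unfolding invA_A by auto
    obtain y1 h1 where u: "y1 = a \<or> y1 = b" "h1 \<in> H" "u = y1 \<otimes> h1"
      using coset_pick[of _ a H b] uv(1) AS by blast
    obtain y2 h2 where v: "y2 = a \<or> y2 = b" "h2 \<in> H" "v = y2 \<otimes> h2"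
      using coset_pick[of _ a H b] uv(2) AS by blast
    have yc: "y1 \<in> carrier G" "y2 \<in> carrier G" using u v ab by auto
    have x: "x = inv h1 \<otimes> (inv y1 \<otimes> y2) \<otimes> h2"
      using inv_mul_expand[OF yc Hc[OF u(2)] Hc[OF v(2)]] uv u v by simp
    have ih1: "inv h1 \<in> H" using u subgroup.m_inv_closed[OF HG] by auto
    consider "y1 = y2" | "y1 = a" "y2 = b" | "y1 = b" "y2 = a" using u v by auto
    then show "x \<in> H \<union> (g <# H) \<union> (inv g <# H)"
    proof cases
      case 1
      then have "x = inv h1 \<otimes> h2" using x yc Hc u v by simp
      then show ?thesis using ih1 v subgroup.m_closed[OF HG] by auto
    next
      case 2
      obtain h' where h': "h' \<in> H" "inv h1 \<otimes> g = g \<otimes> h'" using N1[OF ih1] by auto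
      have "x = g \<otimes> (h' \<otimes> h2)" using x 2 h' Hc gc ih1 v by (simp add: g_def[symmetric] m_assoc[symmetric])
      then show ?thesis using h' v subgroup.m_closed[OF HG] by (auto simp: lc_mem)
    next
      case 3
      obtain h' where h': "h' \<in> H" "inv h1 \<otimes> inv g = inv g \<otimes> h'" using N3[OF ih1] by auto
      have "inv b \<otimes> a = inv g" using ab by (simp add: g_def inv_mult_group)
      then have "x = inv g \<otimes> (h' \<otimes> h2)" using x 3 h' Hc gc ih1 v by (simp add: m_assoc[symmetric])
      then show ?thesis using h' v subgroup.m_closed[OF HG] by (auto simp: lc_mem)
    qed
  qed
  have mc: "x \<otimes> inv y \<in> H" if "x \<in> H" "y \<in> H" for x y
    using that subgroup.m_closed[OF HG] subgroup.m_inv_closed[OF HG] by blast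
  have d1: "H \<inter> (g <# H) = {}"
  proof (rule ccontr)
    assume "H \<inter> (g <# H) \<noteq> {}"
    then obtain y where y: "y \<in> H" "y \<in> g <# H" by blast
    obtain h2 where h2: "h2 \<in> H" "y = g \<otimes> h2" using lc_mem[THEN iffD1, OF y(2)] by blast
    have "y \<otimes> inv h2 = g" using h2 gc Hc[OF h2(1)] by (simp add: m_assoc)
    then show False using mc[OF y(1) h2(1)] gnH by simp
  qed
  have d2: "H \<inter> (inv g <# H) = {}"
  proof (rule ccontr)
    assume "H \<inter> (inv g <# H) \<noteq> {}"
    then obtain y where y: "y \<in> H" "y \<in> inv g <# H" by blast
    obtain h2 where h2: "h2 \<in> H" "y = inv g \<otimes> h2" using lc_mem[THEN iffD1, OF y(2)] by blast
    have "h2 \<otimes> inv y = g" using h2 gc Hc[OF h2(1)] by (simp add: inv_mult_group m_assoc[symmetric])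
    then show False using mc[OF h2(1) y(1)] gnH by simp
  qed
  have d3: "(g <# H) \<inter> (inv g <# H) = {}"
  proof (rule ccontr)
    assume "(g <# H) \<inter> (inv g <# H) \<noteq> {}"
    then obtain y where y: "y \<in> g <# H" "y \<in> inv g <# H" by blast
    obtain h1 where h1: "h1 \<in> H" "y = g \<otimes> h1" using lc_mem[THEN iffD1, OF y(1)] by blast
    obtain h2 where h2: "h2 \<in> H" "y = inv g \<otimes> h2" using lc_mem[THEN iffD1, OF y(2)] by blast
    have c: "h1 \<in> carrier G" "h2 \<in> carrier G" using Hc h1 h2 by auto
    have "g \<otimes> y \<otimes> inv h1 = g \<otimes> g" using h1 c gc by (simp add: m_assoc)
    moreover have "g \<otimes> y \<otimes> inv h1 = h2 \<otimes> inv h1" using h2 c gc by (simp add: m_assoc[symmetric])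
    ultimately have "g \<otimes> g = h2 \<otimes> inv h1" by simp
    then show False using g2 mc[OF h2(1) h1(1)] unfolding g_def by simp
  qed
  show ?thesis using sub sup d1 d2 d3 Ninv unfolding g_def by blast
qed

end


lemma (in group) final_aux:
  fixes H A :: "'a set" and a b :: 'a
  assumes "subgroup H G"
    and "finite H"
    and "a \<in> carrier G" and "b \<in> carrier G"
    and "A \<subseteq> (a <#\<^bsub>G\<^esub> H) \<union> (b <#\<^bsub>G\<^esub> H)"
    and "inv\<^bsub>G\<^esub> a \<otimes>\<^bsub>G\<^esub> b \<in> normalizer_lr G H"
    and "(inv\<^bsub>G\<^esub> a \<otimes>\<^bsub>G\<^esub> b) [^]\<^bsub>G\<^esub> (2::nat) \<notin> H"
    and "real (card A) > 9/5 * real (card H)"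
  shows "real (card ((set_inv\<^bsub>G\<^esub> A) <#>\<^bsub>G\<^esub> A)) < 5/3 * real (card A)
     \<and> (\<exists>g1 \<in> carrier G. \<exists>g2 \<in> carrier G.
          (set_inv\<^bsub>G\<^esub> A) <#>\<^bsub>G\<^esub> A = H \<union> double_coset G H g1 \<union> double_coset G H g2
        \<and> H \<inter> double_coset G H g1 = {}
        \<and> H \<inter> double_coset G H g2 = {}
        \<and> double_coset G H g1 \<inter> double_coset G H g2 = {}
        \<and> card (double_coset G H g1) = card H
        \<and> card (double_coset G H g2) = card H)"
proof -
  define g where "g = inv a \<otimes> b"
  have gc: "g \<in> carrier G" using assms(3,4) by (simp add: g_def)
  have N: "g <# H = H #> g" using assms(6) by (simp add: normalizer_lr_def g_def)
  have g2: "g \<otimes> g \<notin> H" using assms(7) gc by (simp add: g_def[symmetric] numeral_2_eq_2)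
  have core: "set_inv A <#> A = H \<union> (g <# H) \<union> (inv g <# H)
     \<and> H \<inter> (g <# H) = {} \<and> H \<inter> (inv g <# H) = {}
     \<and> (g <# H) \<inter> (inv g <# H) = {}
     \<and> inv g <# H = H #> inv g"
    using main_core[OF assms(1,2,3,4,5) N[unfolded g_def] g2[unfolded g_def] assms(8)]
    unfolding g_def by blast
  have D1: "double_coset G H g = g <# H" using double_coset_eq[OF assms(1) gc N] .
  have D2: "double_coset G H (inv g) = inv g <# H"
    using double_coset_eq[OF assms(1) inv_closed[OF gc]] core by blast
  have C1: "card (g <# H) = card H" using lc_card[OF assms(1) gc] .
  have C2: "card (inv g <# H) = card H" using lc_card[OF assms(1) inv_closed[OF gc]] .
  have F: "finite (g <# H)" "finite (inv g <# H)" using assms(2) lc_finite by auto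
  have "card (H \<union> (g <# H) \<union> (inv g <# H)) = card (H \<union> (g <# H)) + card (inv g <# H)"
    using core F assms(2) by (intro card_Un_disjoint) auto
  also have "card (H \<union> (g <# H)) = card H + card (g <# H)"
    using core F assms(2) by (intro card_Un_disjoint) auto
  finally have "card (set_inv A <#> A) = 3 * card H" using core C1 C2 by simp
  then have "real (card (set_inv A <#> A)) < 5/3 * real (card A)" using assms(8) by simp
  moreover have "\<exists>g1 \<in> carrier G. \<exists>g2 \<in> carrier G.
          (set_inv A) <#> A = H \<union> double_coset G H g1 \<union> double_coset G H g2
        \<and> H \<inter> double_coset G H g1 = {}
        \<and> H \<inter> double_coset G H g2 = {}
        \<and> double_coset G H g1 \<inter> double_coset G H g2 = {}
        \<and> card (double_coset G H g1) = card H
        \<and> card (double_coset G H g2) = card H"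
    using core D1 D2 C1 C2 gc by (intro bexI[of _ g] bexI[of _ "inv g"]) auto
  ultimately show ?thesis by blast
qed

theorem proposition3p1:
  fixes G :: "('a, 'b) monoid_scheme" and H A :: "'a set" and a b :: 'a
  assumes "group G"
    and "subgroup H G"
    and "finite H"
    and "a \<in> carrier G" and "b \<in> carrier G"
    and "A \<subseteq> (a <#\<^bsub>G\<^esub> H) \<union> (b <#\<^bsub>G\<^esub> H)"
    and "inv\<^bsub>G\<^esub> a \<otimes>\<^bsub>G\<^esub> b \<in> normalizer_lr G H"
    and "(inv\<^bsub>G\<^esub> a \<otimes>\<^bsub>G\<^esub> b) [^]\<^bsub>G\<^esub> (2::nat) \<notin> H"
    and "real (card A) > 9/5 * real (card H)"
  shows "real (card ((set_inv\<^bsub>G\<^esub> A) <#>\<^bsub>G\<^esub> A)) < 5/3 * real (card A)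
     \<and> (\<exists>g1 \<in> carrier G. \<exists>g2 \<in> carrier G.
          (set_inv\<^bsub>G\<^esub> A) <#>\<^bsub>G\<^esub> A = H \<union> double_coset G H g1 \<union> double_coset G H g2
        \<and> H \<inter> double_coset G H g1 = {}
        \<and> H \<inter> double_coset G H g2 = {}
        \<and> double_coset G H g1 \<inter> double_coset G H g2 = {}
        \<and> card (double_coset G H g1) = card H
        \<and> card (double_coset G H g2) = card H)"
  by (rule group.final_aux[OF assms])

end
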